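(* Let $r_0>0$ and let $s>\sqrt{2}$ be arbitrary. Consider the stationary closed Nambu–Goto string in the five-dimensional Schwarzschild spacetime given by the embedding $$t=\frac{s r_0\,\tau}{\sqrt{2}},\quad r=s r_0,\quad \theta=\frac{\pi}{4},\quad \phi=\sigma,\quad \psi=\sigma+\tau,\qquad \tau\in\mathbb{R},\ \sigma\in\mathbb{R}/2\pi\mathbb{Z}.$$ Then this string is unstable under linear perturbations: there exist an integer $k$, a complex number $\omega$ with $\operatorname{Im}\omega>0$, and a nonzero constant vector $(c^1,c^2,c^3)\in\mathbb{C}^3$ such that $f^A(\tau,\sigma)=c^A e^{-i\omega\tau+ik\sigma}$ solves the linearized Nambu–Goto equation about this string.
   Context: The five-dimensional Schwarzschild spacetime with horizon radius $r_0>0$ has metric $$g=-\Big(1-\frac{r_0^2}{r^2}\Big)dt^2+\Big(1-\frac{r_0^2}{r^2}\Big)^{-1}dr^2+r^2\big[d\theta^2+\sin^2\theta\,d\phi^2+\cos^2\theta\,d\psi^2\big],$$ with $\theta\in(0,\pi/2)$ and $\phi,\psi\in\mathbb{R}/2\pi\mathbb{Z}$; units with speed of light $1$, signature $(-,+,+,+,+)$. A Nambu–Goto string is a timelike embedding $X^\mu(\xi^a)$ of a 2-dimensional worldsheet $N$ (coordinates $\xi^a=(\tau,\sigma)$) extremizing the area $-T\int d^2\xi\sqrt{|\det G|}$, where $G_{ab}=g_{\mu\nu}\partial_aX^\mu\partial_bX^\nu$ is the induced metric with Levi-Civita connection $D_a$; the equation of motion is $K^\mu{}_{ab}G^{ab}=0$,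 where $K^\mu{}_{ab}=D_aD_bX^\mu+\Gamma^\mu_{\nu\lambda}\partial_aX^\nu\partial_bX^\lambda$ is the second fundamental form (the given embedding satisfies it for every $s>\sqrt2$). Linear perturbations: choose an orthonormal frame $n_A{}^\mu$ ($A=1,2,3$) of the normal bundle of $N$ ($g_{\mu\nu}n_A{}^\mu\partial_aX^\nu=0$, $g_{\mu\nu}n_A{}^\mu n_B{}^\nu=\delta_{AB}$; e.g. $n_1=\frac{\sqrt{s^2-1}}{s}\partial_r$, $n_2=\frac{1}{sr_0}\partial_\theta$, $n_3=\frac{s^2}{\sqrt{(s^2-2)(s^2-1)}}\partial_t-\frac{\sqrt{2(s^2-1)}}{sr_0\sqrt{s^2-2}}(\partial_\phi-\partial_\psi)$), and write a normal perturbation as $\delta X^\mu=f^An_A{}^\mu$ with functions $f^A$ on $N$. Define $K_{Aab}=g_{\mu\nu}n_A{}^\mu K^\nu{}_{ab}$, the normal connection $\mu_{ABa}=g_{\mu\nu}n_A{}^\mu\partial_a n_B{}^\nu+\Gamma_{\alpha\beta\gamma}n_A{}^\alpha n_B{}^\beta\partial_aX^\gamma$ (antisymmetric in $A,B$), and $\mathscr{D}_af^B=D_af^B-\mu_A{}^B{}_af^A$, with frame indices raised/lowered by $\delta_{AB}$ and worldsheet indices by $G_{ab}$. The linearized Nambu–Goto equation is $$\mathscr{D}_a\mathscr{D}^af^B+\Big(K_A{}^{ab}K^B{}_{ab}+R_{\alpha\beta}n_A{}^\alpha n^{B\beta}-R_{\alpha\beta\gamma\delta}n_A{}^\alpha n_C{}^\beta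 n^{B\gamma}n^{C\delta}\Big)f^A=0,$$ where $R^\mu{}_{\nu\lambda\rho}=\Gamma^\mu_{\nu\rho,\lambda}-\Gamma^\mu_{\nu\lambda,\rho}+\Gamma^\mu_{\lambda\delta}\Gamma^\delta_{\nu\rho}-\Gamma^\mu_{\rho\delta}\Gamma^\delta_{\nu\lambda}$ and $R_{\nu\rho}=R^\mu{}_{\nu\mu\rho}$ are the spacetime Riemann and Ricci tensors. A mode $f^A\propto e^{-i\omega\tau+ik\sigma}$ with $\operatorname{Im}\omega>0$ grows exponentially in $\tau$; the string is called unstable if such a mode solution exists. *)

theory Defs
  imports "HOL-Analysis.Analysis"
begin

text \<open>Spacetime indices 0..4 = (t, r, theta, phi, psi); worldsheet indices 0..1 = (tau, sigma);
normal frame indices A = 1..3.\<close>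

definition pd :: "((nat \<Rightarrow> real) \<Rightarrow> 'b::real_normed_vector) \<Rightarrow> (nat \<Rightarrow> real) \<Rightarrow> nat \<Rightarrow> 'b" where
  "pd F x l = vector_derivative (\<lambda>h. F (x(l := h))) (at (x l))"

definition schw_g :: "real \<Rightarrow> (nat \<Rightarrow> real) \<Rightarrow> nat \<Rightarrow> nat \<Rightarrow> real" where
  "schw_g r0 x m n =
     (if m \<noteq> n then 0
      else if m = 0 then - (1 - r0^2 / (x 1)^2)
      else if m = 1 then 1 / (1 - r0^2 / (x 1)^2)
      else if m = 2 then (x 1)^2
      else if m = 3 then (x 1)^2 * (sin (x 2))^2
      else if m = 4 then (x 1)^2 * (cos (x 2))^2
      else 0)"

definition schw_gi :: "real \<Rightarrow> (nat \<Rightarrow> real) \<Rightarrow> nat \<Rightarrow> nat \<Rightarrow> real" where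
  "schw_gi r0 x m n = (if m = n \<and> m < 5 then 1 / schw_g r0 x m m else 0)"

type_synonym metric = "(nat \<Rightarrow> real) \<Rightarrow> nat \<Rightarrow> nat \<Rightarrow> real"

definition chr :: "metric \<Rightarrow> metric \<Rightarrow> (nat \<Rightarrow> real) \<Rightarrow> nat \<Rightarrow> nat \<Rightarrow> nat \<Rightarrow> real" where
  "chr g gi x m n l = (1/2) * (\<Sum>a<5. gi x m a *
      (pd (\<lambda>y. g y a l) x n + pd (\<lambda>y. g y a n) x l - pd (\<lambda>y. g y n l) x a))"

definition chr_low :: "metric \<Rightarrow> metric \<Rightarrow> (nat \<Rightarrow> real) \<Rightarrow> nat \<Rightarrow> nat \<Rightarrow> nat \<Rightarrow> real" where
  "chr_low g gi x a b c = (\<Sum>m<5. g x a m * chr g gi x m b c)"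

definition riem :: "metric \<Rightarrow> metric \<Rightarrow> (nat \<Rightarrow> real) \<Rightarrow> nat \<Rightarrow> nat \<Rightarrow> nat \<Rightarrow> nat \<Rightarrow> real" where
  "riem g gi x m n l r =
     pd (\<lambda>y. chr g gi y m n r) x l - pd (\<lambda>y. chr g gi y m n l) x r
     + (\<Sum>d<5. chr g gi x m l d * chr g gi x d n r)
     - (\<Sum>d<5. chr g gi x m r d * chr g gi x d n l)"

definition ricci :: "metric \<Rightarrow> metric \<Rightarrow> (nat \<Rightarrow> real) \<Rightarrow> nat \<Rightarrow> nat \<Rightarrow> real" where
  "ricci g gi x n r = (\<Sum>m<5. riem g gi x m n m r)"

definition riem_low :: "metric \<Rightarrow> metric \<Rightarrow> (nat \<Rightarrow> real) \<Rightarrow> nat \<Rightarrow> nat \<Rightarrow> nat \<Rightarrow> nat \<Rightarrow> real" where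
  "riem_low g gi x a b c d = (\<Sum>m<5. g x a m * riem g gi x m b c d)"

type_synonym embedding = "(nat \<Rightarrow> real) \<Rightarrow> (nat \<Rightarrow> real)"
type_synonym frame = "(nat \<Rightarrow> real) \<Rightarrow> nat \<Rightarrow> nat \<Rightarrow> real"

definition dX :: "embedding \<Rightarrow> (nat \<Rightarrow> real) \<Rightarrow> nat \<Rightarrow> nat \<Rightarrow> real" where
  "dX X xi a m = pd (\<lambda>eta. X eta m) xi a"

definition indG :: "metric \<Rightarrow> embedding \<Rightarrow> (nat \<Rightarrow> real) \<Rightarrow> nat \<Rightarrow> nat \<Rightarrow> real" where
  "indG g X xi a b = (\<Sum>m<5. \<Sum>n<5. g (X xi) m n * dX X xi a m * dX X xi b n)"

definition inv2 :: "(nat \<Rightarrow> nat \<Rightarrow> real) \<Rightarrow> nat \<Rightarrow> nat \<Rightarrow> real" where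
  "inv2 M a b =
     (let dt = M 0 0 * M 1 1 - M 0 1 * M 1 0 in
      if a = 0 \<and> b = 0 then M 1 1 / dt
      else if a = 1 \<and> b = 1 then M 0 0 / dt
      else if a = 0 \<and> b = 1 then - M 0 1 / dt
      else if a = 1 \<and> b = 0 then - M 1 0 / dt
      else 0)"

definition indGi :: "metric \<Rightarrow> embedding \<Rightarrow> (nat \<Rightarrow> real) \<Rightarrow> nat \<Rightarrow> nat \<Rightarrow> real" where
  "indGi g X xi = inv2 (indG g X xi)"

definition wchr :: "metric \<Rightarrow> embedding \<Rightarrow> (nat \<Rightarrow> real) \<Rightarrow> nat \<Rightarrow> nat \<Rightarrow> nat \<Rightarrow> real" where
  "wchr g X xi c a b = (1/2) * (\<Sum>d<2. indGi g X xi c d *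
      (pd (\<lambda>eta. indG g X eta d b) xi a + pd (\<lambda>eta. indG g X eta d a) xi b
       - pd (\<lambda>eta. indG g X eta a b) xi d))"

definition sff :: "metric \<Rightarrow> metric \<Rightarrow> embedding \<Rightarrow> (nat \<Rightarrow> real) \<Rightarrow> nat \<Rightarrow> nat \<Rightarrow> nat \<Rightarrow> real" where
  "sff g gi X xi m a b =
     pd (\<lambda>eta. dX X eta b m) xi a - (\<Sum>c<2. wchr g X xi c a b * dX X xi c m)
     + (\<Sum>n<5. \<Sum>l<5. chr g gi (X xi) m n l * dX X xi a n * dX X xi b l)"

definition KA :: "metric \<Rightarrow> metric \<Rightarrow> embedding \<Rightarrow> frame \<Rightarrow> (nat \<Rightarrow> real) \<Rightarrow> nat \<Rightarrow> nat \<Rightarrow> nat \<Rightarrow> real" where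
  "KA g gi X nf xi A a b = (\<Sum>m<5. \<Sum>n<5. g (X xi) m n * nf xi A m * sff g gi X xi n a b)"

definition nconn :: "metric \<Rightarrow> metric \<Rightarrow> embedding \<Rightarrow> frame \<Rightarrow> (nat \<Rightarrow> real) \<Rightarrow> nat \<Rightarrow> nat \<Rightarrow> nat \<Rightarrow> real" where
  "nconn g gi X nf xi A B a =
     (\<Sum>m<5. \<Sum>n<5. g (X xi) m n * nf xi A m * pd (\<lambda>eta. nf eta B n) xi a)
     + (\<Sum>p<5. \<Sum>q<5. \<Sum>r<5. chr_low g gi (X xi) p q r * nf xi A p * nf xi B q * dX X xi a r)"

type_synonym pert = "(nat \<Rightarrow> real) \<Rightarrow> nat \<Rightarrow> complex"

definition Dn :: "metric \<Rightarrow> metric \<Rightarrow> embedding \<Rightarrow> frame \<Rightarrow> pert \<Rightarrow> (nat \<Rightarrow> real) \<Rightarrow> nat \<Rightarrow> nat \<Rightarrow> complex" where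
  "Dn g gi X nf f xi a B =
     pd (\<lambda>eta. f eta B) xi a - (\<Sum>A\<in>{1..3}. complex_of_real (nconn g gi X nf xi A B a) * f xi A)"

definition DDn :: "metric \<Rightarrow> metric \<Rightarrow> embedding \<Rightarrow> frame \<Rightarrow> pert \<Rightarrow> (nat \<Rightarrow> real) \<Rightarrow> nat \<Rightarrow> nat \<Rightarrow> nat \<Rightarrow> complex" where
  "DDn g gi X nf f xi a b B =
     pd (\<lambda>eta. Dn g gi X nf f eta b B) xi a
     - (\<Sum>c<2. complex_of_real (wchr g X xi c a b) * Dn g gi X nf f xi c B)
     - (\<Sum>A\<in>{1..3}. complex_of_real (nconn g gi X nf xi A B a) * Dn g gi X nf f xi b A)"

definition boxn :: "metric \<Rightarrow> metric \<Rightarrow> embedding \<Rightarrow> frame \<Rightarrow> pert \<Rightarrow> (nat \<Rightarrow> real) \<Rightarrow> nat \<Rightarrow> complex" where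
  "boxn g gi X nf f xi B =
     (\<Sum>a<2. \<Sum>b<2. complex_of_real (indGi g X xi a b) * DDn g gi X nf f xi a b B)"

definition potn :: "metric \<Rightarrow> metric \<Rightarrow> embedding \<Rightarrow> frame \<Rightarrow> (nat \<Rightarrow> real) \<Rightarrow> nat \<Rightarrow> nat \<Rightarrow> real" where
  "potn g gi X nf xi A B =
     (\<Sum>a<2. \<Sum>b<2. \<Sum>c<2. \<Sum>d<2. indGi g X xi a c * indGi g X xi b d
         * KA g gi X nf xi A c d * KA g gi X nf xi B a b)
     + (\<Sum>p<5. \<Sum>q<5. ricci g gi (X xi) p q * nf xi A p * nf xi B q)
     - (\<Sum>C\<in>{1..3}. \<Sum>p<5. \<Sum>q<5. \<Sum>r<5. \<Sum>u<5.
         riem_low g gi (X xi) p q r u * nf xi A p * nf xi C q * nf xi B r * nf xi C u)"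

definition lin_NG_eq :: "metric \<Rightarrow> metric \<Rightarrow> embedding \<Rightarrow> frame \<Rightarrow> pert \<Rightarrow> bool" where
  "lin_NG_eq g gi X nf f \<longleftrightarrow>
     (\<forall>xi. \<forall>B\<in>{1..3}. boxn g gi X nf f xi B
        + (\<Sum>A\<in>{1..3}. complex_of_real (potn g gi X nf xi A B) * f xi A) = 0)"

definition string_emb :: "real \<Rightarrow> real \<Rightarrow> embedding" where
  "string_emb r0 s xi m =
     (if m = 0 then s * r0 * xi 0 / sqrt 2
      else if m = 1 then s * r0
      else if m = 2 then pi / 4
      else if m = 3 then xi 1
      else if m = 4 then xi 1 + xi 0
      else 0)"

definition string_frame :: "real \<Rightarrow> real \<Rightarrow> frame" where
  "string_frame r0 s xi A m =
     (if A = 1 \<and> m = 1 then sqrt (s^2 - 1) / s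
      else if A = 2 \<and> m = 2 then 1 / (s * r0)
      else if A = 3 \<and> m = 0 then s^2 / sqrt ((s^2 - 2) * (s^2 - 1))
      else if A = 3 \<and> m = 3 then - sqrt (2 * (s^2 - 1)) / (s * r0 * sqrt (s^2 - 2))
      else if A = 3 \<and> m = 4 then sqrt (2 * (s^2 - 1)) / (s * r0 * sqrt (s^2 - 2))
      else 0)"

end

theory Submission
  imports Defs
begin


lemma pd_eq: "((\<lambda>h. F (x(l := h))) has_vector_derivative D) (at (x l)) \<Longrightarrow> pd F x l = D"
  unfolding pd_def by (rule vector_derivative_at)

lemma pd_real: "((\<lambda>h. F (x(l := h))) has_real_derivative D) (at (x l)) \<Longrightarrow> pd F x l = (D::real)"
  by (rule pd_eq) (simp add: has_real_derivative_iff_has_vector_derivative)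

lemma pd_const: "(\<And>h. F (x(l := h)) = c) \<Longrightarrow> pd F x l = 0"
  unfolding pd_def by simp

definition FF :: "real \<Rightarrow> real \<Rightarrow> real" where "FF r0 R = 1 - r0^2 / R^2"
definition FP :: "real \<Rightarrow> real \<Rightarrow> real" where "FP r0 R = 2 * r0^2 / R^3"
definition FPP :: "real \<Rightarrow> real \<Rightarrow> real" where "FPP r0 R = - 6 * r0^2 / R^4"

lemma FF_deriv: "R \<noteq> 0 \<Longrightarrow> ((FF r0) has_real_derivative FP r0 R) (at R)"
  unfolding FF_def FP_def
  by (auto intro!: derivative_eq_intros simp: field_simps eval_nat_numeral)

lemma FP_deriv: "R \<noteq> 0 \<Longrightarrow> ((FP r0) has_real_derivative FPP r0 R) (at R)"
  unfolding FPP_def FP_def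
  by (auto intro!: derivative_eq_intros simp: field_simps eval_nat_numeral)

lemma FF_nz: assumes "R > r0" "r0 > 0" shows "FF r0 R \<noteq> 0"
proof -
  have "r0*r0 < R*R" using assms by (intro mult_strict_mono) auto
  thus ?thesis using assms by (simp add: FF_def field_simps power2_eq_square)
qed

definition gE :: "real \<Rightarrow> nat \<Rightarrow> nat \<Rightarrow> real \<Rightarrow> real \<Rightarrow> real" where
  "gE r0 a b R T =
     (if a \<noteq> b then 0
      else if a = 0 then - FF r0 R
      else if a = 1 then 1 / FF r0 R
      else if a = 2 then R^2
      else if a = 3 then R^2 * (sin T)^2
      else if a = 4 then R^2 * (cos T)^2
      else 0)"

definition gR :: "real \<Rightarrow> nat \<Rightarrow> nat \<Rightarrow> real \<Rightarrow> real \<Rightarrow> real" where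
  "gR r0 a b R T =
     (if a \<noteq> b then 0
      else if a = 0 then - FP r0 R
      else if a = 1 then - FP r0 R / (FF r0 R * FF r0 R)
      else if a = 2 then 2 * R
      else if a = 3 then 2 * R * (sin T)^2
      else if a = 4 then 2 * R * (cos T)^2
      else 0)"

definition gT :: "real \<Rightarrow> nat \<Rightarrow> nat \<Rightarrow> real \<Rightarrow> real \<Rightarrow> real" where
  "gT r0 a b R T =
     (if a \<noteq> b then 0
      else if a = 3 then 2 * R^2 * sin T * cos T
      else if a = 4 then - 2 * R^2 * cos T * sin T
      else 0)"

definition gRR :: "real \<Rightarrow> nat \<Rightarrow> nat \<Rightarrow> real \<Rightarrow> real \<Rightarrow> real" where
  "gRR r0 a b R T =
     (if a \<noteq> b then 0
      else if a = 0 then - FPP r0 R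
      else if a = 1 then (2 * FP r0 R * FP r0 R - FPP r0 R * FF r0 R) / (FF r0 R)^3
      else if a = 2 then 2
      else if a = 3 then 2 * (sin T)^2
      else if a = 4 then 2 * (cos T)^2
      else 0)"

definition gRT :: "real \<Rightarrow> nat \<Rightarrow> nat \<Rightarrow> real \<Rightarrow> real \<Rightarrow> real" where
  "gRT r0 a b R T =
     (if a \<noteq> b then 0
      else if a = 3 then 4 * R * sin T * cos T
      else if a = 4 then - 4 * R * cos T * sin T
      else 0)"

definition gTT :: "real \<Rightarrow> nat \<Rightarrow> nat \<Rightarrow> real \<Rightarrow> real \<Rightarrow> real" where
  "gTT r0 a b R T =
     (if a \<noteq> b then 0
      else if a = 3 then 2 * R^2 * ((cos T)^2 - (sin T)^2)
      else if a = 4 then 2 * R^2 * ((sin T)^2 - (cos T)^2)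
      else 0)"

lemma idx5: "(a::nat) = 0 \<or> a = 1 \<or> a = 2 \<or> a = 3 \<or> a = 4 \<or> a \<ge> 5" by arith

lemma schw_g_eq: "schw_g r0 y a b = gE r0 a b (y 1) (y 2)"
  by (simp add: schw_g_def gE_def FF_def)

lemma schw_gi_eq: "schw_gi r0 y a b = (if a = b \<and> a < 5 then 1 / gE r0 a a (y 1) (y 2) else 0)"
  by (simp add: schw_gi_def schw_g_eq)

context fixes r0 R T :: real assumes r0: "r0 > 0" and RR: "R > r0"
begin

lemma R0: "R \<noteq> 0" using r0 RR by simp
lemma FFnz: "FF r0 R \<noteq> 0" using FF_nz RR r0 by blast

lemmas Fd = FF_deriv[OF R0] FP_deriv[OF R0]

lemma D_gR: "((\<lambda>R. gE r0 a b R T) has_real_derivative gR r0 a b R T) (at R)"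
proof (cases "a = b")
  case False thus ?thesis by (simp add: gE_def gR_def)
next
  case True
  from idx5[of a] show ?thesis using True
    by (elim disjE) (auto simp: gE_def gR_def FFnz field_simps eval_nat_numeral intro!: derivative_eq_intros Fd)
qed

lemma D_gT: "((\<lambda>T. gE r0 a b R T) has_real_derivative gT r0 a b R T) (at T)"
proof (cases "a = b")
  case False thus ?thesis by (simp add: gE_def gT_def)
next
  case True
  from idx5[of a] show ?thesis using True
    by (elim disjE) (auto simp: gE_def gT_def FFnz field_simps eval_nat_numeral intro!: derivative_eq_intros Fd)
qed

lemma D_gRR: "((\<lambda>R. gR r0 a b R T) has_real_derivative gRR r0 a b R T) (at R)"
proof (cases "a = b")
  case False thus ?thesis by (simp add: gR_def gRR_def)
next
  case True
  from idx5[of a] show ?thesis using True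
    by (elim disjE) (auto simp: gR_def gRR_def FFnz field_simps eval_nat_numeral intro!: derivative_eq_intros Fd)
qed

lemma D_gRT: "((\<lambda>T. gR r0 a b R T) has_real_derivative gRT r0 a b R T) (at T)"
proof (cases "a = b")
  case False thus ?thesis by (simp add: gR_def gRT_def)
next
  case True
  from idx5[of a] show ?thesis using True
    by (elim disjE) (auto simp: gR_def gRT_def FFnz field_simps eval_nat_numeral intro!: derivative_eq_intros Fd)
qed

lemma D_gTR: "((\<lambda>R. gT r0 a b R T) has_real_derivative gRT r0 a b R T) (at R)"
proof (cases "a = b")
  case False thus ?thesis by (simp add: gT_def gRT_def)
next
  case True
  from idx5[of a] show ?thesis using True
    by (elim disjE) (auto simp: gT_def gRT_def FFnz field_simps eval_nat_numeral intro!: derivative_eq_intros Fd)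
qed

lemma D_gTT: "((\<lambda>T. gT r0 a b R T) has_real_derivative gTT r0 a b R T) (at T)"
proof (cases "a = b")
  case False thus ?thesis by (simp add: gT_def gTT_def)
next
  case True
  from idx5[of a] show ?thesis using True
    by (elim disjE) (auto simp: gT_def gTT_def FFnz field_simps eval_nat_numeral power2_eq_square intro!: derivative_eq_intros Fd)
qed


lemma gE_nz: assumes "m < 5" "sin T \<noteq> 0" "cos T \<noteq> 0" shows "gE r0 m m R T \<noteq> 0"
  using idx5[of m] assms R0 FFnz by (auto simp: gE_def)

end

definition giE :: "real \<Rightarrow> nat \<Rightarrow> nat \<Rightarrow> real \<Rightarrow> real \<Rightarrow> real" where
  "giE r0 m a R T = (if m = a \<and> m < 5 then 1 / gE r0 m m R T else 0)"
definition giR :: "real \<Rightarrow> nat \<Rightarrow> nat \<Rightarrow> real \<Rightarrow> real \<Rightarrow> real" where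
  "giR r0 m a R T = (if m = a \<and> m < 5 then - gR r0 m m R T / (gE r0 m m R T * gE r0 m m R T) else 0)"
definition giT :: "real \<Rightarrow> nat \<Rightarrow> nat \<Rightarrow> real \<Rightarrow> real \<Rightarrow> real" where
  "giT r0 m a R T = (if m = a \<and> m < 5 then - gT r0 m m R T / (gE r0 m m R T * gE r0 m m R T) else 0)"

definition dG :: "real \<Rightarrow> nat \<Rightarrow> nat \<Rightarrow> nat \<Rightarrow> real \<Rightarrow> real \<Rightarrow> real" where
  "dG r0 a b n R T = (if n = 1 then gR r0 a b R T else if n = 2 then gT r0 a b R T else 0)"
definition dGR :: "real \<Rightarrow> nat \<Rightarrow> nat \<Rightarrow> nat \<Rightarrow> real \<Rightarrow> real \<Rightarrow> real" where
  "dGR r0 a b n R T = (if n = 1 then gRR r0 a b R T else if n = 2 then gRT r0 a b R T else 0)"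
definition dGT :: "real \<Rightarrow> nat \<Rightarrow> nat \<Rightarrow> nat \<Rightarrow> real \<Rightarrow> real \<Rightarrow> real" where
  "dGT r0 a b n R T = (if n = 1 then gRT r0 a b R T else if n = 2 then gTT r0 a b R T else 0)"

definition CE :: "real \<Rightarrow> nat \<Rightarrow> nat \<Rightarrow> nat \<Rightarrow> real \<Rightarrow> real \<Rightarrow> real" where
  "CE r0 m n l R T = 1/2 * (\<Sum>a<5. giE r0 m a R T *
      (dG r0 a l n R T + dG r0 a n l R T - dG r0 n l a R T))"
definition CER :: "real \<Rightarrow> nat \<Rightarrow> nat \<Rightarrow> nat \<Rightarrow> real \<Rightarrow> real \<Rightarrow> real" where
  "CER r0 m n l R T = 1/2 * (\<Sum>a<5. giR r0 m a R T *
      (dG r0 a l n R T + dG r0 a n l R T - dG r0 n l a R T)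
      + (dGR r0 a l n R T + dGR r0 a n l R T - dGR r0 n l a R T) * giE r0 m a R T)"
definition CET :: "real \<Rightarrow> nat \<Rightarrow> nat \<Rightarrow> nat \<Rightarrow> real \<Rightarrow> real \<Rightarrow> real" where
  "CET r0 m n l R T = 1/2 * (\<Sum>a<5. giT r0 m a R T *
      (dG r0 a l n R T + dG r0 a n l R T - dG r0 n l a R T)
      + (dGT r0 a l n R T + dGT r0 a n l R T - dGT r0 n l a R T) * giE r0 m a R T)"

context fixes r0 R T :: real assumes r0: "r0 > 0" and RR: "R > r0"
  and sT: "sin T \<noteq> 0" and cT: "cos T \<noteq> 0"
begin

lemma D_giR: "((\<lambda>R. giE r0 m a R T) has_real_derivative giR r0 m a R T) (at R)"
proof (cases "m = a \<and> m < 5")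
  case True thus ?thesis
  using gE_nz[OF r0 RR, of m T] sT cT D_gR[OF r0 RR, of m m T]
  by (auto simp: giE_def giR_def intro!: derivative_eq_intros)
next
  case False
  hence "(\<lambda>R. giE r0 m a R T) = (\<lambda>_. 0)" "giR r0 m a R T = 0" by (auto simp: giE_def giR_def)
  thus ?thesis by simp
qed

lemma D_giT: "((\<lambda>T. giE r0 m a R T) has_real_derivative giT r0 m a R T) (at T)"
proof (cases "m = a \<and> m < 5")
  case True thus ?thesis
  using gE_nz[OF r0 RR, of m T] sT cT D_gT[OF r0 RR, of m m T]
  by (auto simp: giE_def giT_def intro!: derivative_eq_intros)
next
  case False
  hence "(\<lambda>T. giE r0 m a R T) = (\<lambda>_. 0)" "giT r0 m a R T = 0" by (auto simp: giE_def giT_def)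
  thus ?thesis by simp
qed

lemma D_dGR: "((\<lambda>R. dG r0 a b n R T) has_real_derivative dGR r0 a b n R T) (at R)"
  using D_gRR[OF r0 RR] D_gTR[OF r0 RR] by (auto simp: dG_def dGR_def)

lemma D_dGT: "((\<lambda>T. dG r0 a b n R T) has_real_derivative dGT r0 a b n R T) (at T)"
  using D_gRT[OF r0 RR] D_gTT[OF r0 RR] by (auto simp: dG_def dGT_def)

lemma D_CER: "((\<lambda>R. CE r0 m n l R T) has_real_derivative CER r0 m n l R T) (at R)"
  unfolding CE_def CER_def
  by (intro DERIV_cmult DERIV_sum DERIV_mult DERIV_add DERIV_diff D_giR D_dGR)

lemma D_CET: "((\<lambda>T. CE r0 m n l R T) has_real_derivative CET r0 m n l R T) (at T)"
  unfolding CE_def CET_def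
  by (intro DERIV_cmult DERIV_sum DERIV_mult DERIV_add DERIV_diff D_giT D_dGT)

end

lemma pd_g: assumes "r0 > 0" "y 1 > r0"
  shows "pd (\<lambda>y. schw_g r0 y a b) y n = dG r0 a b n (y 1) (y 2)"
proof -
  consider "n = 1" | "n = 2" | "n \<noteq> 1 \<and> n \<noteq> 2" by blast
  thus ?thesis
  proof cases
    case 1
    show ?thesis unfolding 1 dG_def
      by (rule pd_real) (use D_gR[OF assms, of a b "y 2"] in \<open>simp add: schw_g_eq\<close>)
  next
    case 2
    show ?thesis unfolding 2 dG_def
      by (rule pd_real) (use D_gT[OF assms, of a b "y 2"] in \<open>simp add: schw_g_eq\<close>)
  next
    case 3
    thus ?thesis unfolding dG_def
      by (simp add: pd_const[where c = "gE r0 a b (y 1) (y 2)"] schw_g_eq)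
  qed
qed

lemma chr_eq: assumes "r0 > 0" "y 1 > r0"
  shows "chr (schw_g r0) (schw_gi r0) y m n l = CE r0 m n l (y 1) (y 2)"
  unfolding chr_def CE_def using assms
  by (simp add: pd_g schw_gi_eq giE_def del: One_nat_def)

lemma pd_chr: assumes "r0 > 0" "x 1 > r0" "sin (x 2) \<noteq> 0" "cos (x 2) \<noteq> 0"
  shows "pd (\<lambda>y. chr (schw_g r0) (schw_gi r0) y m n r) x l =
    (if l = 1 then CER r0 m n r (x 1) (x 2) else if l = 2 then CET r0 m n r (x 1) (x 2) else 0)"
proof -
  consider "l = 1" | "l = 2" | "l \<noteq> 1 \<and> l \<noteq> 2" by blast
  thus ?thesis
  proof cases
    case 1
    have "((\<lambda>h. chr (schw_g r0) (schw_gi r0) (x(1 := h)) m n r) has_real_derivative CER r0 m n r (x 1) (x 2)) (at (x 1))"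
      apply (rule has_field_derivative_transform_within_open[where S = "{r0<..}"])
      apply (rule D_CER[OF assms])
      using assms by (auto simp: chr_eq)
    thus ?thesis unfolding 1 by (simp add: pd_real)
  next
    case 2
    have "((\<lambda>h. chr (schw_g r0) (schw_gi r0) (x(2 := h)) m n r) has_real_derivative CET r0 m n r (x 1) (x 2)) (at (x 2))"
      using D_CET[OF assms] assms by (simp add: chr_eq)
    thus ?thesis unfolding 2 by (simp add: pd_real)
  next
    case 3
    thus ?thesis
      using assms by (simp add: pd_const[where c = "CE r0 m n r (x 1) (x 2)"] chr_eq)
  qed
qed


definition pdC :: "real \<Rightarrow> nat \<Rightarrow> nat \<Rightarrow> nat \<Rightarrow> nat \<Rightarrow> real \<Rightarrow> real \<Rightarrow> real" where
  "pdC r0 l m n r R T = (if l = 1 then CER r0 m n r R T else if l = 2 then CET r0 m n r R T else 0)"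

definition RE :: "real \<Rightarrow> nat \<Rightarrow> nat \<Rightarrow> nat \<Rightarrow> nat \<Rightarrow> real \<Rightarrow> real \<Rightarrow> real" where
  "RE r0 m n l r R T = pdC r0 l m n r R T - pdC r0 r m n l R T
     + (\<Sum>d<5. CE r0 m l d R T * CE r0 d n r R T)
     - (\<Sum>d<5. CE r0 m r d R T * CE r0 d n l R T)"

lemma riem_eq: assumes "r0 > 0" "x 1 > r0" "sin (x 2) \<noteq> 0" "cos (x 2) \<noteq> 0"
  shows "riem (schw_g r0) (schw_gi r0) x m n l r = RE r0 m n l r (x 1) (x 2)"
  unfolding riem_def RE_def pdC_def using assms
  by (simp add: pd_chr chr_eq del: One_nat_def)

lemma lt5: "(m::nat) < 5 \<Longrightarrow> m = 0 \<or> m = 1 \<or> m = 2 \<or> m = 3 \<or> m = 4" by arith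
lemma sum5: "(\<Sum>a<5. f a) = f 0 + f 1 + f 2 + f 3 + f (4::nat)"
  by (simp add: eval_nat_numeral)
lemma sum2: "(\<Sum>a<2. f a) = f 0 + f (1::nat)"
  by (simp add: eval_nat_numeral)
lemma sum13': "(\<Sum>a\<in>{Suc 0..3}. f a) = f 1 + f 2 + f (3::nat)"
proof -
  have "{Suc 0..3::nat} = {1,2,3}" by auto
  thus ?thesis by (simp add: add.assoc)
qed
lemma sum13: "(\<Sum>a\<in>{1..3}. f a) = f 1 + f 2 + f (3::nat)"
proof -
  have "{1..3::nat} = {1,2,3}" by auto
  thus ?thesis by (simp add: add.assoc)
qed

lemma sc45: "sin (pi/4) * cos (pi/4) = 1/2" "cos (pi/4) * sin (pi/4) = 1/2" "(sin (pi/4))^2 = 1/2" "(cos (pi/4))^2 = 1/2"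
  "cos (pi/4) * cos (pi/4) = 1/2" "sin (pi/4) * sin (pi/4) = 1/2"
  "cos (pi/4) * (cos (pi/4) * x) = x/2" "sin (pi/4) * (sin (pi/4) * x) = x/2"
  by (simp_all add: sin_45 cos_45 power_divide)

lemma sq2: "sqrt 2 * sqrt 2 = 2" "sqrt 2 * (sqrt 2 * x) = 2 * x" by simp_all

definition wv :: "real \<Rightarrow> real" where "wv s = s^2 - 1"

definition CEv :: "real \<Rightarrow> real \<Rightarrow> nat \<Rightarrow> nat \<Rightarrow> nat \<Rightarrow> real" where
  "CEv s r0 m n l =
    (if (m,n,l) = (0,0,1) \<or> (m,n,l) = (0,1,0) then 1/(s*r0*wv s)
     else if (m,n,l) = (1,0,0) then wv s/(s^5*r0)
     else if (m,n,l) = (1,1,1) then -1/(s*r0*wv s)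
     else if (m,n,l) = (1,2,2) then -r0*wv s/s
     else if (m,n,l) = (1,3,3) \<or> (m,n,l) = (1,4,4) then -r0*wv s/(2 * s)
     else if (m,n,l) = (2,1,2) \<or> (m,n,l) = (2,2,1) \<or> (m,n,l) = (3,1,3) \<or> (m,n,l) = (3,3,1)
          \<or> (m,n,l) = (4,1,4) \<or> (m,n,l) = (4,4,1) then 1/(s*r0)
     else if (m,n,l) = (2,3,3) then -1/2
     else if (m,n,l) = (2,4,4) then 1/2
     else if (m,n,l) = (3,2,3) \<or> (m,n,l) = (3,3,2) then 1
     else if (m,n,l) = (4,2,4) \<or> (m,n,l) = (4,4,2) then -1
     else 0)"

context fixes r0 s :: real assumes r0: "r0 > 0" and s1: "s > 1"
begin

lemma FF_at: "FF r0 (s*r0) = wv s/s^2"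
  using r0 s1 by (simp add: FF_def wv_def field_simps power2_eq_square)
lemma FP_at: "FP r0 (s*r0) = 2/(s^3*r0)"
  using r0 s1 by (simp add: FP_def field_simps eval_nat_numeral)
lemma FPP_at: "FPP r0 (s*r0) = -6/(s^4*r0^2)"
  using r0 s1 by (simp add: FPP_def field_simps eval_nat_numeral)

lemma s2: "wv s \<noteq> 0" using s1 unfolding wv_def by (simp add: power2_eq_square) (smt (verit) mult_less_cancel_left1)


lemma CE_at: assumes "m < 5" "n < 5" "l < 5"
  shows "CE r0 m n l (s*r0) (pi/4) = CEv s r0 m n l"
  using lt5[OF assms(1)] lt5[OF assms(2)] lt5[OF assms(3)] r0 s1 s2
  apply (elim disjE)
  apply (simp_all add: sum5 CE_def CEv_def giE_def dG_def gE_def gR_def gT_def FF_at FP_at sc45)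
  apply (simp_all add: field_simps)
  apply (simp_all add: algebra_simps eval_nat_numeral sc45)
  done


end

definition CERv :: "real \<Rightarrow> real \<Rightarrow> nat \<Rightarrow> nat \<Rightarrow> nat \<Rightarrow> real" where
  "CERv s r0 m n l =
    (if (m,n,l) = (0,0,1) \<or> (m,n,l) = (0,1,0) then (-3 * wv s - 2)/(s^2 * r0^2 * (wv s)^2)
     else if (m,n,l) = (1,0,0) then (2 - 3 * wv s)/(s^6 * r0^2)
     else if (m,n,l) = (1,1,1) then (3 * wv s + 2)/(s^2 * r0^2 * (wv s)^2)
     else if (m,n,l) = (1,2,2) then -(wv s + 2)/s^2
     else if (m,n,l) = (1,3,3) \<or> (m,n,l) = (1,4,4) then -(wv s + 2)/(2 * s^2)
     else if (m,n,l) = (2,1,2) \<or> (m,n,l) = (2,2,1) \<or> (m,n,l) = (3,1,3) \<or> (m,n,l) = (3,3,1)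
          \<or> (m,n,l) = (4,1,4) \<or> (m,n,l) = (4,4,1) then -1/(s^2 * r0^2)
     else 0)"

definition CETv :: "real \<Rightarrow> real \<Rightarrow> nat \<Rightarrow> nat \<Rightarrow> nat \<Rightarrow> real" where
  "CETv s r0 m n l =
    (if (m,n,l) = (1,3,3) then -r0 * wv s/s
     else if (m,n,l) = (1,4,4) then r0 * wv s/s
     else if (m,n,l) = (3,2,3) \<or> (m,n,l) = (3,3,2) \<or> (m,n,l) = (4,2,4) \<or> (m,n,l) = (4,4,2) then -2
     else 0)"

context fixes r0 s :: real assumes r0: "r0 > 0" and s1: "s > 1"
begin

lemma CER_at: assumes "m < 5" "n < 5" "l < 5"
  shows "CER r0 m n l (s*r0) (pi/4) = CERv s r0 m n l"
  using lt5[OF assms(1)] lt5[OF assms(2)] lt5[OF assms(3)] r0 s1 s2[OF r0 s1]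
  apply (elim disjE)
  apply (simp_all add: sum5 CER_def CERv_def giE_def giR_def dG_def dGR_def gE_def gR_def gT_def
     gRR_def gRT_def gTT_def FF_at[OF r0 s1] FP_at[OF r0 s1] FPP_at[OF r0 s1] sc45)
  apply (simp_all add: field_simps)
  apply (simp_all add: algebra_simps eval_nat_numeral sc45)
  done

lemma CET_at: assumes "m < 5" "n < 5" "l < 5"
  shows "CET r0 m n l (s*r0) (pi/4) = CETv s r0 m n l"
  using lt5[OF assms(1)] lt5[OF assms(2)] lt5[OF assms(3)] r0 s1 s2[OF r0 s1]
  apply (elim disjE)
  apply (simp_all add: sum5 CET_def CETv_def giE_def giT_def dG_def dGT_def gE_def gR_def gT_def
     gRR_def gRT_def gTT_def FF_at[OF r0 s1] FP_at[OF r0 s1] FPP_at[OF r0 s1] sc45)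
  apply (simp_all add: field_simps)
  apply (simp_all add: algebra_simps eval_nat_numeral sc45)
  done


end

lemma pd_c0[simp]: "pd (\<lambda>_. c) x l = 0" by (rule pd_const) simp

lemma pd_aff: "(\<And>h. F (x(l:=h)) = c + d * (h - x l)) \<Longrightarrow> pd F x l = (d::real)"
  by (rule pd_real) (auto intro!: derivative_eq_intros)

definition dXv :: "real \<Rightarrow> real \<Rightarrow> nat \<Rightarrow> nat \<Rightarrow> real" where
  "dXv r0 s a m = (if a = 0 then (if m = 0 then s*r0/sqrt 2 else if m = 4 then 1 else 0)
     else if a = 1 then (if m = 3 \<or> m = 4 then 1 else 0) else 0)"

lemma emb_aff: "string_emb r0 s (xi(a:=h)) m = string_emb r0 s xi m + dXv r0 s a m * (h - xi a)"
  by (cases "a = 0"; cases "a = 1") (auto simp: string_emb_def dXv_def field_simps)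

lemma dX_eq: "dX (string_emb r0 s) xi a m = dXv r0 s a m"
  unfolding dX_def by (rule pd_aff) (rule emb_aff)

lemma X1: "string_emb r0 s xi 1 = s*r0" "string_emb r0 s xi (Suc 0) = s*r0" and X2: "string_emb r0 s xi 2 = pi/4"
  by (simp_all add: string_emb_def)

lemma nf_const: "pd (\<lambda>eta. string_frame r0 s eta B n) xi a = 0"
  by (rule pd_const[where c = "string_frame r0 s xi B n"]) (simp add: string_frame_def)

lemma sin45nz: "sin (pi/4) \<noteq> 0" "cos (pi/4) \<noteq> 0" by (simp_all add: sin_45 cos_45)

definition Gv :: "real \<Rightarrow> real \<Rightarrow> nat \<Rightarrow> nat \<Rightarrow> real" where
  "Gv r0 s a b = (if a = 0 \<and> b = 0 then r0^2/2 else if (a = 0 \<and> b = 1) \<or> (a = 1 \<and> b = 0) then s^2*r0^2/2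
     else if a = 1 \<and> b = 1 then s^2*r0^2 else 0)"

context fixes r0 s :: real assumes r0: "r0 > 0" and s1: "s > 1"
begin

lemma sr0: "s * r0 > r0" using r0 s1 by simp
lemma nz: "s \<noteq> 0" "r0 \<noteq> 0" using r0 s1 by auto

lemma g_X: "schw_g r0 (string_emb r0 s xi) a b = gE r0 a b (s*r0) (pi/4)"
  by (simp add: schw_g_eq X1 X2)
lemma chr_X: "chr (schw_g r0) (schw_gi r0) (string_emb r0 s xi) m n l = CE r0 m n l (s*r0) (pi/4)"
  using chr_eq[OF r0, of "string_emb r0 s xi"] sr0 by (simp add: X1 X2)
lemma riem_X: "riem (schw_g r0) (schw_gi r0) (string_emb r0 s xi) m n l r = RE r0 m n l r (s*r0) (pi/4)"
  using riem_eq[OF r0, of "string_emb r0 s xi"] sr0 sin45nz by (simp add: X1 X2)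

lemma indG_X: "indG (schw_g r0) (string_emb r0 s) xi a b = Gv r0 s a b"
  unfolding indG_def g_X dX_eq sum5
  apply (cases "a = 0"; cases "a = 1"; cases "b = 0"; cases "b = 1")
  apply (simp_all add: gE_def dXv_def Gv_def sc45 FF_at[OF r0 s1] wv_def sq2)
  apply (simp_all add: field_simps sq2 nz)
  apply (simp_all add: algebra_simps eval_nat_numeral)
  done

end


definition Qv :: "real \<Rightarrow> real \<Rightarrow> nat \<Rightarrow> nat \<Rightarrow> real" where
  "Qv s r0 m n =
    (let D = s^2 * r0^2; S = s^2; w = wv s in
     if (m,n) = (0,1) then 3/(D*w) else if (m,n) = (0,2) then -1/S
     else if (m,n) = (0,3) \<or> (m,n) = (0,4) then -1/(2*S)
     else if (m,n) = (1,0) then -3*w/(S*S*D) else if (m,n) = (1,2) then -1/S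
     else if (m,n) = (1,3) \<or> (m,n) = (1,4) then -1/(2*S)
     else if (m,n) = (2,0) \<or> (m,n) = (3,0) \<or> (m,n) = (4,0) then w/(S*S*D)
     else if (m,n) = (2,1) \<or> (m,n) = (3,1) \<or> (m,n) = (4,1) then -1/(D*w)
     else if (m,n) = (3,2) \<or> (m,n) = (4,2) then 1/S
     else if (m,n) = (2,3) \<or> (m,n) = (2,4) \<or> (m,n) = (3,4) \<or> (m,n) = (4,3) then 1/(2*S)
     else 0)"

definition REv :: "real \<Rightarrow> real \<Rightarrow> nat \<Rightarrow> nat \<Rightarrow> nat \<Rightarrow> nat \<Rightarrow> real" where
  "REv s r0 m n l r = (if m \<noteq> n \<and> l = m \<and> r = n then Qv s r0 m n
     else if m \<noteq> n \<and> l = n \<and> r = m then - Qv s r0 m n else 0)"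

context fixes r0 s :: real assumes r0: "r0 > 0" and s1: "s > 1"
begin

lemma RE_at: assumes "m < 5" "n < 5" "l < 5" "r < 5"
  shows "RE r0 m n l r (s*r0) (pi/4) = REv s r0 m n l r"
  using lt5[OF assms(1)] lt5[OF assms(2)] lt5[OF assms(3)] lt5[OF assms(4)] r0 s1 s2[OF r0 s1]
  apply (elim disjE)
  apply (simp_all add: RE_def pdC_def sum5 CE_at[OF r0 s1] CER_at[OF r0 s1] CET_at[OF r0 s1]
     CEv_def CERv_def CETv_def REv_def Qv_def Let_def)
  apply (simp_all add: field_simps)
  apply (simp_all add: algebra_simps eval_nat_numeral wv_def)
  done

end

definition vv :: "real \<Rightarrow> real" where "vv s = s^2 - 2"

definition Kc :: "real \<Rightarrow> real \<Rightarrow> real" where "Kc r0 s = 1/(r0^2 * s^2 * vv s)"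

definition Giv :: "real \<Rightarrow> real \<Rightarrow> nat \<Rightarrow> nat \<Rightarrow> real" where
  "Giv r0 s a b = (if a = 0 \<and> b = 0 then -4 * s^2 * Kc r0 s else if (a = 0 \<and> b = 1) \<or> (a = 1 \<and> b = 0) then 2 * s^2 * Kc r0 s
     else if a = 1 \<and> b = 1 then -2 * Kc r0 s else 0)"

definition nfv :: "real \<Rightarrow> real \<Rightarrow> nat \<Rightarrow> nat \<Rightarrow> real" where
  "nfv r0 s A m =
     (if A = 1 \<and> m = 1 then sqrt (wv s) / s
      else if A = 2 \<and> m = 2 then 1 / (s * r0)
      else if A = 3 \<and> m = 0 then s^2 / (sqrt (vv s) * sqrt (wv s))
      else if A = 3 \<and> m = 3 then - (sqrt 2 * sqrt (wv s)) / (s * r0 * sqrt (vv s))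
      else if A = 3 \<and> m = 4 then (sqrt 2 * sqrt (wv s)) / (s * r0 * sqrt (vv s))
      else 0)"

lemma nf_eq: "string_frame r0 s xi A m = nfv r0 s A m"
proof -
  have "sqrt (2 * (s^2 - 1)) = sqrt 2 * sqrt (s^2 - 1)" "sqrt ((s^2 - 2) * (s^2 - 1)) = sqrt (s^2 - 2) * sqrt (s^2 - 1)"
    by (rule real_sqrt_mult)+
  thus ?thesis unfolding string_frame_def nfv_def wv_def vv_def by presburger
qed

definition KAv :: "real \<Rightarrow> real \<Rightarrow> nat \<Rightarrow> nat \<Rightarrow> nat \<Rightarrow> real" where
  "KAv r0 s A a b =
    (if A = 1 then (if a = 0 \<and> b = 0 then - r0 * wv s * sqrt (wv s) / (2 * s^2)
                    else if a = 1 \<and> b = 1 then - r0 * sqrt (wv s) else - r0 * sqrt (wv s) / 2)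
     else if A = 2 then (if a = 1 \<and> b = 1 then 0 else s * r0 / 2)
     else 0)"

definition muv :: "real \<Rightarrow> nat \<Rightarrow> nat \<Rightarrow> nat \<Rightarrow> real" where
  "muv s A B a =
    (let al = - sqrt (vv s) / (sqrt 2 * s); be = sqrt (wv s) / (sqrt 2 * sqrt (vv s)) in
     if a = 0 then (if A = 1 \<and> B = 3 then al else if A = 3 \<and> B = 1 then - al
                    else if A = 2 \<and> B = 3 then be else if A = 3 \<and> B = 2 then - be else 0)
     else (if A = 2 \<and> B = 3 then 2 * be else if A = 3 \<and> B = 2 then - 2 * be else 0))"

lemma lt2: "(a::nat) < 2 \<Longrightarrow> a = 0 \<or> a = 1" by arith
lemma in13: "(A::nat) \<in> {1..3} \<Longrightarrow> A = 1 \<or> A = 2 \<or> A = 3" by auto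

definition potv :: "real \<Rightarrow> real \<Rightarrow> nat \<Rightarrow> nat \<Rightarrow> real" where
  "potv r0 s A B = (if A = B then (if A = 1 then 2 * s^2 * Kc r0 s else if A = 2 then -2 * (s^2+1) * Kc r0 s
     else 2 * Kc r0 s) else 0)"

context fixes r0 s :: real assumes r0: "r0 > 0" and sq: "s > sqrt 2"
begin

lemma s1: "s > 1"
proof -
  have "sqrt 2 > 1" by simp
  thus ?thesis using sq by linarith
qed

lemma s2g: "s^2 > 2"
proof -
  have "(sqrt 2)^2 < s^2" using sq by (intro power_strict_mono) auto
  thus ?thesis by simp
qed


lemma s2nz: "s^2 - 2 \<noteq> 0" using s2g by simp
lemma nz2: "s \<noteq> 0" "r0 \<noteq> 0" using r0 s1 by auto

lemma wvpos: "wv s > 0" "vv s > 0" using s2g by (auto simp: wv_def vv_def)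
lemma sqf: "sqrt (wv s) * sqrt (wv s) = wv s" "sqrt (vv s) * sqrt (vv s) = vv s"
  "sqrt (wv s) * (sqrt (wv s) * x) = wv s * x" "sqrt (vv s) * (sqrt (vv s) * x) = vv s * x"
  "(sqrt (wv s))^2 = wv s" "(sqrt (vv s))^2 = vv s"
  using wvpos by auto
lemma absw: "\<bar>wv s\<bar> = wv s" "\<bar>vv s\<bar> = vv s" using wvpos by auto
lemma nzs: "sqrt (wv s) \<noteq> 0" "sqrt (vv s) \<noteq> 0" "wv s \<noteq> 0" "vv s \<noteq> 0" "s \<noteq> 0" "r0 \<noteq> 0"
  using wvpos r0 s1 by auto

lemma dt: "Gv r0 s 0 0 * Gv r0 s 1 1 - Gv r0 s 0 1 * Gv r0 s 1 0 = -(r0^4 * s^2 * vv s)/4"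
  by (simp add: Gv_def vv_def field_simps eval_nat_numeral)

lemma indGi_X: "indGi (schw_g r0) (string_emb r0 s) xi a b = Giv r0 s a b"
  unfolding indGi_def inv2_def indG_X[OF r0 s1] Let_def dt
  apply (cases "a = 0"; cases "a = 1"; cases "b = 0"; cases "b = 1")
  apply (simp_all add: Gv_def Giv_def Kc_def)
  apply (simp_all add: field_simps nzs)
  apply ((simp_all add: algebra_simps eval_nat_numeral)?)
  done

lemma wchr_X: "wchr (schw_g r0) (string_emb r0 s) xi c a b = 0"
proof -
  have "\<And>d b a. pd (\<lambda>eta. indG (schw_g r0) (string_emb r0 s) eta d b) xi a = 0"
    by (rule pd_const[where c = "Gv r0 s _ _"]) (simp add: indG_X[OF r0 s1])
  thus ?thesis unfolding wchr_def by simp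
qed

lemma sff_X: "sff (schw_g r0) (schw_gi r0) (string_emb r0 s) xi m a b =
   (\<Sum>n<5. \<Sum>l<5. CE r0 m n l (s*r0) (pi/4) * dXv r0 s a n * dXv r0 s b l)"
proof -
  have "pd (\<lambda>eta. dX (string_emb r0 s) eta b m) xi a = 0"
    by (rule pd_const[where c = "dXv r0 s b m"]) (simp add: dX_eq)
  thus ?thesis unfolding sff_def wchr_X dX_eq chr_X[OF r0 s1] by simp
qed

lemma KA_X: assumes "A \<in> {1..3}" "a < 2" "b < 2"
  shows "KA (schw_g r0) (schw_gi r0) (string_emb r0 s) (string_frame r0 s) xi A a b = KAv r0 s A a b"
  using in13[OF assms(1)] lt2[OF assms(2)] lt2[OF assms(3)]
  unfolding KA_def sff_X g_X[OF r0 s1] nf_eq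
  apply (elim disjE)
  apply (simp_all add: sum5 CE_at[OF r0 s1] CEv_def dXv_def gE_def nfv_def KAv_def FF_at[OF r0 s1])
  apply (simp_all add: field_simps nzs sqf sq2)
  apply (simp_all add: sqf wv_def vv_def algebra_simps eval_nat_numeral)
  done

lemma nconn_X: assumes "A \<in> {1..3}" "B \<in> {1..3}" "a < 2"
  shows "nconn (schw_g r0) (schw_gi r0) (string_emb r0 s) (string_frame r0 s) xi A B a = muv s A B a"
  using in13[OF assms(1)] in13[OF assms(2)] lt2[OF assms(3)]
  unfolding nconn_def nf_const chr_low_def g_X[OF r0 s1] nf_eq chr_X[OF r0 s1] dX_eq
  apply (elim disjE)
  apply (simp_all add: sum5 CE_at[OF r0 s1] CEv_def dXv_def gE_def nfv_def muv_def Let_def FF_at[OF r0 s1] sc45)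
  apply (simp_all add: field_simps nzs sqf sq2 sc45)
  apply (simp_all add: sqf wv_def vv_def algebra_simps eval_nat_numeral sc45)
  done



lemma riem_low_X: assumes "p < 5" "q < 5" "r < 5" "u < 5"
  shows "riem_low (schw_g r0) (schw_gi r0) (string_emb r0 s xi) p q r u = gE r0 p p (s*r0) (pi/4) * REv s r0 p q r u"
  unfolding riem_low_def g_X[OF r0 s1] riem_X[OF r0 s1] using lt5[OF assms(1)] assms
  by (elim disjE) (simp_all add: sum5 RE_at[OF r0 s1] gE_def)

lemma ricci_X: assumes "p < 5" "q < 5"
  shows "ricci (schw_g r0) (schw_gi r0) (string_emb r0 s xi) p q = 0"
  unfolding ricci_def riem_X[OF r0 s1]
  using lt5[OF assms(1)] lt5[OF assms(2)] nzs
  apply (elim disjE)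
  apply (simp_all add: sum5 RE_at[OF r0 s1] REv_def Qv_def Let_def)
  apply ((simp_all add: field_simps)?)
  done

end

context fixes r0 s :: real assumes r0: "r0 > 0" and sq: "s > sqrt 2"
begin
lemmas s1' = s1[OF r0 sq]
lemmas X = indGi_X[OF r0 sq] KA_X[OF r0 sq] ricci_X[OF r0 sq] riem_low_X[OF r0 sq] absw[OF r0 sq] sqf[OF r0 sq] nzs[OF r0 sq]
lemma potn_11: "potn (schw_g r0) (schw_gi r0) (string_emb r0 s) (string_frame r0 s) xi 1 1 = potv r0 s 1 1"
  unfolding potn_def
  apply (simp only: sum2 sum5 sum13 sum13')
  apply (simp only: nf_eq)
  apply (simp add: nfv_def)
  apply (simp only: X KAv_def Giv_def)
  apply (simp add: gE_def REv_def Qv_def Let_def potv_def FF_at[OF r0 s1'] sc45)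
  apply (simp add: KA_X[OF r0 sq] KAv_def)
  apply ((simp add: field_simps X sq2 Kc_def)?)
  apply ((simp add: X wv_def vv_def algebra_simps eval_nat_numeral)?)
  done

lemma potn_12: "potn (schw_g r0) (schw_gi r0) (string_emb r0 s) (string_frame r0 s) xi 1 2 = potv r0 s 1 2"
  unfolding potn_def
  apply (simp only: sum2 sum5 sum13 sum13')
  apply (simp only: nf_eq)
  apply (simp add: nfv_def)
  apply (simp only: X KAv_def Giv_def)
  apply (simp add: gE_def REv_def Qv_def Let_def potv_def FF_at[OF r0 s1'] sc45)
  apply (simp add: KA_X[OF r0 sq] KAv_def)
  apply ((simp add: field_simps X sq2 Kc_def)?)
  apply ((simp add: X wv_def vv_def algebra_simps eval_nat_numeral)?)
  done

lemma potn_13: "potn (schw_g r0) (schw_gi r0) (string_emb r0 s) (string_frame r0 s) xi 1 3 = potv r0 s 1 3"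
  unfolding potn_def
  apply (simp only: sum2 sum5 sum13 sum13')
  apply (simp only: nf_eq)
  apply (simp add: nfv_def)
  apply (simp only: X KAv_def Giv_def)
  apply (simp add: gE_def REv_def Qv_def Let_def potv_def FF_at[OF r0 s1'] sc45)
  apply (simp add: KA_X[OF r0 sq] KAv_def)
  apply ((simp add: field_simps X sq2 Kc_def)?)
  apply ((simp add: X wv_def vv_def algebra_simps eval_nat_numeral)?)
  done

lemma potn_21: "potn (schw_g r0) (schw_gi r0) (string_emb r0 s) (string_frame r0 s) xi 2 1 = potv r0 s 2 1"
  unfolding potn_def
  apply (simp only: sum2 sum5 sum13 sum13')
  apply (simp only: nf_eq)
  apply (simp add: nfv_def)
  apply (simp only: X KAv_def Giv_def)
  apply (simp add: gE_def REv_def Qv_def Let_def potv_def FF_at[OF r0 s1'] sc45)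
  apply (simp add: KA_X[OF r0 sq] KAv_def)
  apply ((simp add: field_simps X sq2 Kc_def)?)
  apply ((simp add: X wv_def vv_def algebra_simps eval_nat_numeral)?)
  done

lemma potn_22: "potn (schw_g r0) (schw_gi r0) (string_emb r0 s) (string_frame r0 s) xi 2 2 = potv r0 s 2 2"
  unfolding potn_def
  apply (simp only: sum2 sum5 sum13 sum13')
  apply (simp only: nf_eq)
  apply (simp add: nfv_def)
  apply (simp only: X KAv_def Giv_def)
  apply (simp add: gE_def REv_def Qv_def Let_def potv_def FF_at[OF r0 s1'] sc45)
  apply (simp add: KA_X[OF r0 sq] KAv_def)
  apply ((simp add: field_simps X sq2 Kc_def)?)
  apply ((simp add: X wv_def vv_def algebra_simps eval_nat_numeral)?)
  done

lemma potn_23: "potn (schw_g r0) (schw_gi r0) (string_emb r0 s) (string_frame r0 s) xi 2 3 = potv r0 s 2 3"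
  unfolding potn_def
  apply (simp only: sum2 sum5 sum13 sum13')
  apply (simp only: nf_eq)
  apply (simp add: nfv_def)
  apply (simp only: X KAv_def Giv_def)
  apply (simp add: gE_def REv_def Qv_def Let_def potv_def FF_at[OF r0 s1'] sc45)
  apply (simp add: KA_X[OF r0 sq] KAv_def)
  apply ((simp add: field_simps X sq2 Kc_def)?)
  apply ((simp add: X wv_def vv_def algebra_simps eval_nat_numeral)?)
  done

lemma potn_31: "potn (schw_g r0) (schw_gi r0) (string_emb r0 s) (string_frame r0 s) xi 3 1 = potv r0 s 3 1"
  unfolding potn_def
  apply (simp only: sum2 sum5 sum13 sum13')
  apply (simp only: nf_eq)
  apply (simp add: nfv_def)
  apply (simp only: X KAv_def Giv_def)
  apply (simp add: gE_def REv_def Qv_def Let_def potv_def FF_at[OF r0 s1'] sc45)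
  apply (simp add: KA_X[OF r0 sq] KAv_def)
  apply ((simp add: field_simps X sq2 Kc_def)?)
  apply ((simp add: X wv_def vv_def algebra_simps eval_nat_numeral)?)
  done

lemma potn_32: "potn (schw_g r0) (schw_gi r0) (string_emb r0 s) (string_frame r0 s) xi 3 2 = potv r0 s 3 2"
  unfolding potn_def
  apply (simp only: sum2 sum5 sum13 sum13')
  apply (simp only: nf_eq)
  apply (simp add: nfv_def)
  apply (simp only: X KAv_def Giv_def)
  apply (simp add: gE_def REv_def Qv_def Let_def potv_def FF_at[OF r0 s1'] sc45)
  apply (simp add: KA_X[OF r0 sq] KAv_def)
  apply ((simp add: field_simps X sq2 Kc_def)?)
  apply ((simp add: X wv_def vv_def algebra_simps eval_nat_numeral)?)
  done

lemma potn_33: "potn (schw_g r0) (schw_gi r0) (string_emb r0 s) (string_frame r0 s) xi 3 3 = potv r0 s 3 3"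
  unfolding potn_def
  apply (simp only: sum2 sum5 sum13 sum13')
  apply (simp only: nf_eq)
  apply (simp add: nfv_def)
  apply (simp only: X KAv_def Giv_def)
  apply (simp add: gE_def REv_def Qv_def Let_def potv_def FF_at[OF r0 s1'] sc45)
  apply (simp add: KA_X[OF r0 sq] KAv_def)
  apply ((simp add: field_simps X sq2 Kc_def)?)
  apply ((simp add: X wv_def vv_def algebra_simps eval_nat_numeral)?)
  done

lemma potn_X: assumes "A \<in> {1..3}" "B \<in> {1..3}"
  shows "potn (schw_g r0) (schw_gi r0) (string_emb r0 s) (string_frame r0 s) xi A B = potv r0 s A B"
  using in13[OF assms(1)] in13[OF assms(2)]
  by (elim disjE) (simp_all only: potn_11 potn_12 potn_13 potn_21 potn_22 potn_23 potn_31 potn_32 potn_33)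
end

definition Eexp :: "complex \<Rightarrow> int \<Rightarrow> (nat \<Rightarrow> real) \<Rightarrow> complex" where
  "Eexp \<omega> k xi = exp (- \<i> * \<omega> * complex_of_real (xi 0) + \<i> * of_int k * complex_of_real (xi 1))"

definition pv :: "complex \<Rightarrow> int \<Rightarrow> nat \<Rightarrow> complex" where
  "pv \<omega> k b = (if b = 0 then - \<i> * \<omega> else if b = 1 then \<i> * of_int k else 0)"

lemma E_upd: "Eexp \<omega> k (xi(b:=h)) = Eexp \<omega> k xi * exp (pv \<omega> k b * (of_real h - of_real (xi b)))"
  by (cases "b = 0"; cases "b = 1") (simp_all add: Eexp_def pv_def mult_exp_exp algebra_simps)

lemma pd_E: "pd (\<lambda>eta. K * Eexp \<omega> k eta) xi b = pv \<omega> k b * K * Eexp \<omega> k xi"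
proof (rule pd_eq)
  define g where "g z = K * Eexp \<omega> k xi * exp (pv \<omega> k b * (z - of_real (xi b)))" for z
  have "(g has_field_derivative pv \<omega> k b * K * Eexp \<omega> k xi) (at (of_real (xi b)))"
    unfolding g_def by (auto intro!: derivative_eq_intros)
  hence "((\<lambda>h. g (of_real h)) has_vector_derivative pv \<omega> k b * K * Eexp \<omega> k xi) (at (xi b))"
    by (rule has_vector_derivative_real_field)
  moreover have "(\<lambda>h. g (of_real h)) = (\<lambda>h. K * Eexp \<omega> k (xi(b:=h)))"
    by (rule ext) (simp add: g_def E_upd mult.assoc)
  ultimately show "((\<lambda>h. K * Eexp \<omega> k (xi(b:=h))) has_vector_derivative pv \<omega> k b * K * Eexp \<omega> k xi) (at (xi b))"
    by simp
qed

definition Vv :: "(nat \<Rightarrow> nat \<Rightarrow> nat \<Rightarrow> complex) \<Rightarrow> (nat \<Rightarrow> complex) \<Rightarrow> (nat \<Rightarrow> complex) \<Rightarrow> nat \<Rightarrow> nat \<Rightarrow> complex" where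
  "Vv mu p c b B = p b * c B - (\<Sum>A\<in>{1..3}. mu A B b * c A)"

definition Rrow :: "(nat \<Rightarrow> nat \<Rightarrow> complex) \<Rightarrow> (nat \<Rightarrow> nat \<Rightarrow> nat \<Rightarrow> complex) \<Rightarrow> (nat \<Rightarrow> nat \<Rightarrow> complex) \<Rightarrow> (nat \<Rightarrow> complex) \<Rightarrow> (nat \<Rightarrow> complex) \<Rightarrow> nat \<Rightarrow> complex" where
  "Rrow Gi mu pot p c B = (\<Sum>a<2. \<Sum>b<2. Gi a b * (p a * Vv mu p c b B - (\<Sum>A\<in>{1..3}. mu A B a * Vv mu p c b A)))
     + (\<Sum>A\<in>{1..3}. pot A B * c A)"

context fixes r0 s :: real assumes r0: "r0 > 0" and sq: "s > sqrt 2"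
begin

abbreviation "MU \<equiv> (\<lambda>A B a. complex_of_real (muv s A B a))"

lemma Dn_X: assumes "B \<in> {1..3}" "b < 2"
  shows "Dn (schw_g r0) (schw_gi r0) (string_emb r0 s) (string_frame r0 s) (\<lambda>xi A. c A * Eexp \<omega> k xi) xi b B
     = Eexp \<omega> k xi * Vv MU (pv \<omega> k) c b B"
proof -
  have "(\<Sum>A\<in>{1..3}. complex_of_real (nconn (schw_g r0) (schw_gi r0) (string_emb r0 s) (string_frame r0 s) xi A B b) * (c A * Eexp \<omega> k xi))
     = (\<Sum>A\<in>{1..3}. MU A B b * c A) * Eexp \<omega> k xi"
    unfolding sum_distrib_right
    by (rule sum.cong) (auto simp: nconn_X[OF r0 sq _ assms])
  thus ?thesis unfolding Dn_def Vv_def pd_E by (simp add: algebra_simps)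
qed

lemma DDn_X: assumes "B \<in> {1..3}" "a < 2" "b < 2"
  shows "DDn (schw_g r0) (schw_gi r0) (string_emb r0 s) (string_frame r0 s) (\<lambda>xi A. c A * Eexp \<omega> k xi) xi a b B
     = Eexp \<omega> k xi * (pv \<omega> k a * Vv MU (pv \<omega> k) c b B - (\<Sum>A\<in>{1..3}. MU A B a * Vv MU (pv \<omega> k) c b A))"
proof -
  have f1: "(\<lambda>eta. Dn (schw_g r0) (schw_gi r0) (string_emb r0 s) (string_frame r0 s) (\<lambda>xi A. c A * Eexp \<omega> k xi) eta b B)
     = (\<lambda>eta. Vv MU (pv \<omega> k) c b B * Eexp \<omega> k eta)"
    by (rule ext) (simp add: Dn_X[OF assms(1,3)] mult.commute)
  have f2: "(\<Sum>A\<in>{1..3}. complex_of_real (nconn (schw_g r0) (schw_gi r0) (string_emb r0 s) (string_frame r0 s) xi A B a) *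
      Dn (schw_g r0) (schw_gi r0) (string_emb r0 s) (string_frame r0 s) (\<lambda>xi A. c A * Eexp \<omega> k xi) xi b A)
     = Eexp \<omega> k xi * (\<Sum>A\<in>{1..3}. MU A B a * Vv MU (pv \<omega> k) c b A)"
    unfolding sum_distrib_left
    by (rule sum.cong) (auto simp: nconn_X[OF r0 sq _ assms(1,2)] Dn_X[OF _ assms(3)])
  show ?thesis unfolding DDn_def f1 f2 pd_E wchr_X[OF r0 sq] by (simp add: algebra_simps)
qed

lemma boxn_X: assumes "B \<in> {1..3}"
  shows "boxn (schw_g r0) (schw_gi r0) (string_emb r0 s) (string_frame r0 s) (\<lambda>xi A. c A * Eexp \<omega> k xi) xi B
     + (\<Sum>A\<in>{1..3}. complex_of_real (potn (schw_g r0) (schw_gi r0) (string_emb r0 s) (string_frame r0 s) xi A B) * (c A * Eexp \<omega> k xi))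
     = Eexp \<omega> k xi * Rrow (\<lambda>a b. complex_of_real (Giv r0 s a b)) MU (\<lambda>A B. complex_of_real (potv r0 s A B)) (pv \<omega> k) c B"
proof -
  have "(\<Sum>A\<in>{1..3}. complex_of_real (potn (schw_g r0) (schw_gi r0) (string_emb r0 s) (string_frame r0 s) xi A B) * (c A * Eexp \<omega> k xi))
     = Eexp \<omega> k xi * (\<Sum>A\<in>{1..3}. complex_of_real (potv r0 s A B) * c A)"
    unfolding sum_distrib_left by (rule sum.cong) (auto simp: potn_X[OF r0 sq _ assms])
  moreover have "boxn (schw_g r0) (schw_gi r0) (string_emb r0 s) (string_frame r0 s) (\<lambda>xi A. c A * Eexp \<omega> k xi) xi B
     = Eexp \<omega> k xi * (\<Sum>a<2. \<Sum>b<2. complex_of_real (Giv r0 s a b) * (pv \<omega> k a * Vv MU (pv \<omega> k) c b B - (\<Sum>A\<in>{1..3}. MU A B a * Vv MU (pv \<omega> k) c b A)))"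
    unfolding boxn_def indGi_X[OF r0 sq] sum_distrib_left
    by (intro sum.cong refl) (simp add: DDn_X[OF assms] algebra_simps)
  ultimately show ?thesis unfolding Rrow_def by (simp add: algebra_simps)
qed

lemma lin_from_rows: assumes "\<forall>B\<in>{1..3}. Rrow (\<lambda>a b. complex_of_real (Giv r0 s a b)) MU (\<lambda>A B. complex_of_real (potv r0 s A B)) (pv \<omega> k) c B = 0"
  shows "lin_NG_eq (schw_g r0) (schw_gi r0) (string_emb r0 s) (string_frame r0 s)
                (\<lambda>xi A. c A * exp (- \<i> * \<omega> * complex_of_real (xi 0) + \<i> * of_int k * complex_of_real (xi 1)))"
proof -
  have e: "(\<lambda>xi A. c A * exp (- \<i> * \<omega> * complex_of_real (xi 0) + \<i> * of_int k * complex_of_real (xi 1)))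
     = (\<lambda>xi A. c A * Eexp \<omega> k xi)" by (simp add: Eexp_def)
  show ?thesis unfolding e lin_NG_eq_def using assms boxn_X by simp
qed

end

definition lamf :: "complex \<Rightarrow> complex \<Rightarrow> complex \<Rightarrow> complex" where
  "lamf S p0 p1 = -2 * S * p0^2 + 2 * S * p0 * p1 - p1^2"
definition uf :: "complex \<Rightarrow> complex \<Rightarrow> complex \<Rightarrow> complex" where "uf S p0 p1 = -4 * S * p0 + 2 * S * p1"
definition vf :: "complex \<Rightarrow> complex \<Rightarrow> complex \<Rightarrow> complex" where "vf S p0 p1 = 2 * S * p0 - 2 * p1"
definition aaf :: "complex \<Rightarrow> complex \<Rightarrow> complex \<Rightarrow> complex" where "aaf S p0 p1 = lamf S p0 p1 + 2 * S - 2"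
definition bbf :: "complex \<Rightarrow> complex \<Rightarrow> complex \<Rightarrow> complex" where "bbf S p0 p1 = lamf S p0 p1 - 2 * S"
definition cvec :: "complex \<Rightarrow> complex \<Rightarrow> complex \<Rightarrow> complex \<Rightarrow> complex \<Rightarrow> nat \<Rightarrow> complex" where
  "cvec S al be p0 p1 A = (if A = 1 then uf S p0 p1 * al * bbf S p0 p1
     else if A = 2 then (uf S p0 p1 + 2 * vf S p0 p1) * be * aaf S p0 p1
     else if A = 3 then - (aaf S p0 p1 * bbf S p0 p1) else 0)"
definition hPf :: "complex \<Rightarrow> complex \<Rightarrow> complex \<Rightarrow> complex \<Rightarrow> complex \<Rightarrow> complex" where
  "hPf S al be p0 p1 = (uf S p0 p1 * al)^2 * bbf S p0 p1 + ((uf S p0 p1 + 2 * vf S p0 p1) * be)^2 * aaf S p0 p1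
     + lamf S p0 p1 * aaf S p0 p1 * bbf S p0 p1"

lemma sum2c: "(\<Sum>a<2. f a) = f 0 + f (1::nat)"
  by (simp add: eval_nat_numeral)
lemma sum13c: "(\<Sum>a\<in>{1..3}. f a) = f 1 + f 2 + f (3::nat)"
proof -
  have "{1..3::nat} = {1,2,3}" by auto
  thus ?thesis by (simp add: add.assoc)
qed

lemma core:
  fixes p0 p1 al be S K :: complex
  assumes hA: "2 * S * al^2 = S - 2" and hB: "2 * (S - 2) * be^2 = S - 1"
  and Gi: "Gi 0 0 = -4 * S * K" "Gi 0 1 = 2 * S * K" "Gi 1 0 = 2 * S * K" "Gi 1 1 = -2 * K"
  and mu: "\<And>a. mu 1 1 a = 0" "\<And>a. mu 2 2 a = 0" "\<And>a. mu 3 3 a = 0" "\<And>a. mu 1 2 a = 0" "\<And>a. mu 2 1 a = 0"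
     "mu 1 3 0 = al" "mu 3 1 0 = - al" "mu 2 3 0 = be" "mu 3 2 0 = - be"
     "mu 1 3 1 = 0" "mu 3 1 1 = 0" "mu 2 3 1 = 2 * be" "mu 3 2 1 = - 2 * be"
  and pot: "pot 1 1 = 2 * S * K" "pot 2 2 = -2 * (S + 1) * K" "pot 3 3 = 2 * K"
     "pot 1 2 = 0" "pot 2 1 = 0" "pot 1 3 = 0" "pot 3 1 = 0" "pot 2 3 = 0" "pot 3 2 = 0"
  and p: "p 0 = p0" "p 1 = p1"
  and hP: "hPf S al be p0 p1 = 0"
  and B: "B \<in> {1..3}"
  shows "Rrow Gi mu pot p (cvec S al be p0 p1) B = 0"
proof -
  have r: "Rrow Gi mu pot p (cvec S al be p0 p1) B' = 0" if "B' = 1 \<or> B' = 2 \<or> B' = 3" for B'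
  proof -
    have hP': "(uf S p0 p1 * al)^2 * bbf S p0 p1 + ((uf S p0 p1 + 2 * vf S p0 p1) * be)^2 * aaf S p0 p1
     + lamf S p0 p1 * aaf S p0 p1 * bbf S p0 p1 = 0" using hP unfolding hPf_def .
    have hP'': "(uf S p0 p1 * al)^2 * bbf S p0 p1 + ((uf S p0 p1 + 2 * vf S p0 p1) * be)^2 * aaf S p0 p1
     + lamf S p0 p1 * aaf S p0 p1 * bbf S p0 p1 = 0" by (rule hP')
    note facts = hA hB hP''[unfolded aaf_def bbf_def lamf_def uf_def vf_def]
    note simps = Rrow_def Vv_def sum2c sum13c sum13' Gi mu pot p cvec_def Gi[unfolded One_nat_def]
       mu[unfolded One_nat_def] pot[unfolded One_nat_def] p[unfolded One_nat_def] aaf_def bbf_def lamf_def uf_def vf_def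
    have "Rrow Gi mu pot p (cvec S al be p0 p1) 1 = 0" using facts by (simp add: simps) algebra
    moreover have "Rrow Gi mu pot p (cvec S al be p0 p1) 2 = 0" using facts by (simp add: simps) algebra
    moreover have "Rrow Gi mu pot p (cvec S al be p0 p1) 3 = 0" using facts by (simp add: simps) algebra
    ultimately show ?thesis using that by auto
  qed
  show ?thesis using B by (intro r) auto
qed


context fixes r0 s :: real assumes r0: "r0 > 0" and sq: "s > sqrt 2"
begin

lemma hA_real: "2 * s^2 * (- sqrt (vv s) / (sqrt 2 * s))^2 = s^2 - 2"
proof -
  have "(sqrt (vv s))^2 = vv s" using wvpos[OF r0 sq] by simp
  thus ?thesis using s1[OF r0 sq] by (simp add: power_divide power_mult_distrib vv_def field_simps)
qed

lemma hB_real: "2 * (s^2 - 2) * (sqrt (wv s) / (sqrt 2 * sqrt (vv s)))^2 = s^2 - 1"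
proof -
  have "(sqrt (vv s))^2 = vv s" "(sqrt (wv s))^2 = wv s" using wvpos[OF r0 sq] by simp_all
  thus ?thesis using wvpos[OF r0 sq] by (simp add: power_divide power_mult_distrib vv_def wv_def field_simps)
qed

lemma rows:
  assumes "pv \<omega> k 0 = p0" "pv \<omega> k 1 = p1"
  and "hPf (complex_of_real (s^2)) (complex_of_real (- sqrt (vv s) / (sqrt 2 * s)))
        (complex_of_real (sqrt (wv s) / (sqrt 2 * sqrt (vv s)))) p0 p1 = 0"
  shows "lin_NG_eq (schw_g r0) (schw_gi r0) (string_emb r0 s) (string_frame r0 s)
                (\<lambda>xi A. cvec (complex_of_real (s^2)) (complex_of_real (- sqrt (vv s) / (sqrt 2 * s)))
        (complex_of_real (sqrt (wv s) / (sqrt 2 * sqrt (vv s)))) p0 p1 A * exp (- \<i> * \<omega> * complex_of_real (xi 0) + \<i> * of_int k * complex_of_real (xi 1)))"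
proof (rule lin_from_rows[OF r0 sq], intro ballI)
  fix B :: nat assume B: "B \<in> {1..3}"
  have hA: "2 * complex_of_real (s^2) * (complex_of_real (- sqrt (vv s) / (sqrt 2 * s)))^2 = complex_of_real (s^2) - 2"
  proof -
    have "complex_of_real (2 * s^2 * (- sqrt (vv s) / (sqrt 2 * s))^2) = complex_of_real (s^2 - 2)"
      using hA_real by simp
    thus ?thesis by simp
  qed
  have hB: "2 * (complex_of_real (s^2) - 2) * (complex_of_real (sqrt (wv s) / (sqrt 2 * sqrt (vv s))))^2 = complex_of_real (s^2) - 1"
  proof -
    have "complex_of_real (2 * (s^2 - 2) * (sqrt (wv s) / (sqrt 2 * sqrt (vv s)))^2) = complex_of_real (s^2 - 1)"
      using hB_real by simp
    thus ?thesis by simp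
  qed
  show "Rrow (\<lambda>a b. complex_of_real (Giv r0 s a b)) (\<lambda>A B a. complex_of_real (muv s A B a)) (\<lambda>A B. complex_of_real (potv r0 s A B))
          (pv \<omega> k) (cvec (complex_of_real (s^2)) (complex_of_real (- sqrt (vv s) / (sqrt 2 * s)))
        (complex_of_real (sqrt (wv s) / (sqrt 2 * sqrt (vv s)))) p0 p1) B = 0"
    apply (rule core, rule hA, rule hB)
    apply (simp_all add: Giv_def muv_def Let_def potv_def assms(1) assms(2)[unfolded One_nat_def] assms(3)[simplified])
    using B by auto
qed

end

lemma ii: "\<i> * \<i> = -1" "\<i>^2 = -1" by (simp_all add: power2_eq_square)

lemma case_small:
  fixes r0 s :: real
  assumes r0: "r0 > 0" and sq: "s > sqrt 2" and s3: "s^2 < 3"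
  shows "\<exists>k::int. \<exists>\<omega>::complex. Im \<omega> > 0 \<and>
           (\<exists>c::nat \<Rightarrow> complex. (\<exists>A\<in>{1..3::nat}. c A \<noteq> 0) \<and>
              lin_NG_eq (schw_g r0) (schw_gi r0) (string_emb r0 s) (string_frame r0 s)
                (\<lambda>xi A. c A * exp (- \<i> * \<omega> * complex_of_real (xi 0)
                                    + \<i> * of_int k * complex_of_real (xi 1))))"
proof -
  have s1: "s > 1" using s1[OF r0 sq] .
  define g where "g = sqrt ((3 - s^2) / s^2)"
  have gpos: "g > 0" unfolding g_def using s3 s1 by simp
  have gsq: "s^2 * g^2 = 3 - s^2" unfolding g_def using s3 s1 by simp
  define Sc where "Sc = complex_of_real (s^2)"
  define al where "al = complex_of_real (- sqrt (vv s) / (sqrt 2 * s))"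
  define be where "be = complex_of_real (sqrt (wv s) / (sqrt 2 * sqrt (vv s)))"
  define G where "G = complex_of_real g"
  have hG: "Sc * G^2 = 3 - Sc"
  proof -
    have "complex_of_real (s^2 * g^2) = complex_of_real (3 - s^2)" using gsq by simp
    thus ?thesis unfolding Sc_def G_def by simp
  qed
  have hA: "2 * Sc * al^2 = Sc - 2"
  proof -
    have "complex_of_real (2 * s^2 * (- sqrt (vv s) / (sqrt 2 * s))^2) = complex_of_real (s^2 - 2)"
      using hA_real[OF r0 sq] by simp
    thus ?thesis unfolding Sc_def al_def by simp
  qed
  define \<omega> where "\<omega> = \<i> * G"
  have p0: "pv \<omega> 0 0 = G" unfolding pv_def \<omega>_def by (simp add: ii mult.assoc[symmetric])
  have p1: "pv \<omega> 0 1 = 0" unfolding pv_def by simp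
  have zz: "- 4 * Sc * G + 2 * (2 * Sc * G) = 0" by simp
  have hP: "hPf Sc al be G 0 = 0"
    unfolding hPf_def aaf_def bbf_def lamf_def uf_def vf_def
    apply (simp only: mult_zero_left mult_zero_right zero_power2 diff_zero add_0_right add_0_left minus_zero)
    apply (simp only: zz)
    apply (simp only: mult_zero_left mult_zero_right zero_power2 diff_zero add_0_right add_0_left minus_zero)
    using hA hG by algebra
  have lin: "lin_NG_eq (schw_g r0) (schw_gi r0) (string_emb r0 s) (string_frame r0 s)
                (\<lambda>xi A. cvec Sc al be G 0 A * exp (- \<i> * \<omega> * complex_of_real (xi 0) + \<i> * of_int 0 * complex_of_real (xi 1)))"
    using rows[OF r0 sq p0 p1] hP unfolding Sc_def al_def be_def by simp
  have c3: "cvec Sc al be G 0 3 = 24 * Sc - 48"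
    unfolding cvec_def aaf_def bbf_def lamf_def
    apply (simp only: if_True if_False mult_zero_left mult_zero_right zero_power2 diff_zero add_0_right add_0_left minus_zero
        numeral_eq_iff semiring_norm simp_thms)
    using hG by algebra
  have "24 * Sc - 48 = complex_of_real (24 * s^2 - 48)" unfolding Sc_def by simp
  moreover have "24 * s^2 - 48 \<noteq> 0" using s2g[OF r0 sq] by simp
  ultimately have "cvec Sc al be G 0 3 \<noteq> 0" using c3 by (metis of_real_eq_0_iff)
  moreover have "Im \<omega> > 0" unfolding \<omega>_def G_def using gpos by simp
  ultimately show ?thesis using lin by (intro exI[of _ 0] exI[of _ \<omega>] conjI exI[of _ "cvec Sc al be G 0"]) auto
qed


lemma delta_neg: fixes x :: real assumes "x \<ge> 1"
  shows "2304 - 1920 * x - 2304 * x^2 - 1440 * x^3 - 960 * x^4 < 0"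
proof -
  have "x^2 \<ge> 1" using assms by (simp add: one_le_power)
  moreover have "x^3 \<ge> 0" "x^4 \<ge> 0" using assms by simp_all
  ultimately show ?thesis using assms by linarith
qed

lemma real_root:
  fixes S :: real assumes S3: "S \<ge> 3"
  shows "\<exists>\<rho>. \<rho>^3 + (6 - 4*S) * \<rho>^2 + (2*S - 12) * \<rho> - 4*(S - 2) = 0"
proof -
  let ?f = "\<lambda>x::real. x^3 + (6 - 4*S) * x^2 + (2*S - 12) * x - 4*(S - 2)"
  have "?f 0 \<le> 0" using S3 by simp
  moreover have "?f (4*S) = 104 * S^2 - 52 * S + 8" by (simp add: algebra_simps eval_nat_numeral)
  moreover have "104 * S^2 - 52 * S + 8 \<ge> 0"
  proof -
    have "S^2 \<ge> S" using S3 by (simp add: power2_eq_square)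
    thus ?thesis using S3 by linarith
  qed
  moreover have "0 \<le> 4*S" using S3 by simp
  moreover have "continuous_on {0..4*S} ?f" by (intro continuous_intros)
  ultimately obtain x where "?f x = 0" using IVT'[of ?f 0 0 "4*S"] by auto
  thus ?thesis by blast
qed

lemma case_large:
  fixes r0 s :: real
  assumes r0: "r0 > 0" and sq: "s > sqrt 2" and s3: "s^2 \<ge> 3"
  shows "\<exists>k::int. \<exists>\<omega>::complex. Im \<omega> > 0 \<and>
           (\<exists>c::nat \<Rightarrow> complex. (\<exists>A\<in>{1..3::nat}. c A \<noteq> 0) \<and>
              lin_NG_eq (schw_g r0) (schw_gi r0) (string_emb r0 s) (string_frame r0 s)
                (\<lambda>xi A. c A * exp (- \<i> * \<omega> * complex_of_real (xi 0)
                                    + \<i> * of_int k * complex_of_real (xi 1))))"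
proof -
  have s1: "s > 1" using s1[OF r0 sq] .
  define S where "S = s^2"
  have S3: "S \<ge> 3" using s3 S_def by simp
  obtain \<rho> where r: "\<rho>^3 + (6 - 4*S) * \<rho>^2 + (2*S - 12) * \<rho> - 4*(S - 2) = 0"
    using real_root[OF S3] by blast
  define d where "d = (\<rho> + (6 - 4*S))^2 - 4 * (\<rho>^2 + (6 - 4*S) * \<rho> + (2*S - 12))"
  have ident: "(3*\<rho>^2 + 2*(6 - 4*S)*\<rho> + (2*S - 12))^2 * d =
     2304 - 1920 * (S-2) - 2304 * (S-2)^2 - 1440 * (S-2)^3 - 960 * (S-2)^4"
    unfolding d_def using r by algebra
  have dneg: "d < 0"
  proof (rule ccontr)
    assume "\<not> d < 0"
    hence "(3*\<rho>^2 + 2*(6 - 4*S)*\<rho> + (2*S - 12))^2 * d \<ge> 0" by simp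
    moreover have "2304 - 1920 * (S-2) - 2304 * (S-2)^2 - 1440 * (S-2)^3 - 960 * (S-2)^4 < 0"
      using delta_neg[of "S - 2"] S3 by simp
    ultimately show False using ident by simp
  qed
  define tt where "tt = sqrt (- d)"
  have ttpos: "tt > 0" unfolding tt_def using dneg by simp
  have ttsq: "tt^2 = - d" unfolding tt_def using dneg by simp
  define Sc where "Sc = complex_of_real (s^2)"
  define al where "al = complex_of_real (- sqrt (vv s) / (sqrt 2 * s))"
  define be where "be = complex_of_real (sqrt (wv s) / (sqrt 2 * sqrt (vv s)))"
  define R where "R = complex_of_real \<rho>"
  define T where "T = complex_of_real tt"
  have ScS: "Sc = complex_of_real S" unfolding Sc_def S_def ..
  have fR: "R^3 + (6 - 4*Sc) * R^2 + (2*Sc - 12) * R - 4*(Sc - 2) = 0"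
  proof -
    have "complex_of_real (\<rho>^3 + (6 - 4*S) * \<rho>^2 + (2*S - 12) * \<rho> - 4*(S - 2)) = 0" using r by simp
    thus ?thesis unfolding R_def ScS by simp
  qed
  have fT: "T^2 = - ((R + (6 - 4*Sc))^2 - 4 * (R^2 + (6 - 4*Sc) * R + (2*Sc - 12)))"
  proof -
    have "complex_of_real (tt^2) = complex_of_real (- d)" using ttsq by simp
    thus ?thesis unfolding T_def R_def ScS d_def by simp
  qed
  define L2 where "L2 = - (R + (6 - 4*Sc)) + \<i> * T"
  have P8: "L2^3 + 2 * (6 - 4*Sc) * L2^2 + 4 * (2*Sc - 12) * L2 - 32 * (Sc - 2) = 0"
    unfolding L2_def using fR fT ii by algebra
  have ImL2: "Im L2 = tt" unfolding L2_def R_def T_def ScS by simp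
  have Scnz: "Sc \<noteq> 0" unfolding Sc_def using s1 by simp
  define z where "z = (L2 - 2 + Sc) / (4 * Sc)"
  have hz: "4 * Sc * z = L2 - 2 + Sc" unfolding z_def using Scnz by simp
  have Imz: "Im z > 0"
  proof -
    have "z = (L2 - 2 + Sc) / complex_of_real (4 * s^2)" unfolding z_def Sc_def by simp
    hence "Im z = Im (L2 - 2 + Sc) / (4 * s^2)" by (simp add: Im_divide_of_real)
    also have "Im (L2 - 2 + Sc) = tt" using ImL2 unfolding Sc_def by simp
    finally show ?thesis using ttpos s1 by simp
  qed
  define \<nu>0 where "\<nu>0 = csqrt z"
  define \<nu> where "\<nu> = (if Im \<nu>0 > 0 then \<nu>0 else - \<nu>0)"
  have nusq: "\<nu>^2 = z" unfolding \<nu>_def \<nu>0_def by simp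
  have Imnu0: "Im \<nu>0 \<noteq> 0"
  proof
    assume "Im \<nu>0 = 0"
    hence "Im (\<nu>0^2) = 0" by (simp add: power2_eq_square)
    thus False using Imz unfolding \<nu>0_def by simp
  qed
  have Imnu: "Im \<nu> > 0" unfolding \<nu>_def using Imnu0 by auto
  define \<omega> where "\<omega> = \<nu> - 1/2"
  have Imw: "Im \<omega> > 0" unfolding \<omega>_def using Imnu by simp
  define p0 where "p0 = - \<i> * \<omega>"
  have p0r: "2 * p0 = \<i> - 2 * \<i> * \<nu>" unfolding p0_def \<omega>_def by (simp add: algebra_simps)
  have pp0: "pv \<omega> 1 0 = p0" unfolding pv_def p0_def by simp
  have pp1: "pv \<omega> 1 1 = \<i>" unfolding pv_def by simp
  have hA: "2 * Sc * al^2 = Sc - 2"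
  proof -
    have "complex_of_real (2 * s^2 * (- sqrt (vv s) / (sqrt 2 * s))^2) = complex_of_real (s^2 - 2)"
      using hA_real[OF r0 sq] by simp
    thus ?thesis unfolding Sc_def al_def by simp
  qed
  have hB: "2 * (Sc - 2) * be^2 = Sc - 1"
  proof -
    have "complex_of_real (2 * (s^2 - 2) * (sqrt (wv s) / (sqrt 2 * sqrt (vv s)))^2) = complex_of_real (s^2 - 1)"
      using hB_real[OF r0 sq] by simp
    thus ?thesis unfolding Sc_def be_def by simp
  qed
  have lamf_eq: "2 * lamf Sc p0 \<i> = L2"
    unfolding lamf_def using p0r nusq hz ii by algebra
  have hP: "hPf Sc al be p0 \<i> = 0"
    unfolding hPf_def aaf_def bbf_def lamf_def uf_def vf_def
    using hA hB nusq hz ii P8 p0r by algebra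
  have lin: "lin_NG_eq (schw_g r0) (schw_gi r0) (string_emb r0 s) (string_frame r0 s)
                (\<lambda>xi A. cvec Sc al be p0 \<i> A * exp (- \<i> * \<omega> * complex_of_real (xi 0) + \<i> * of_int 1 * complex_of_real (xi 1)))"
    using rows[OF r0 sq pp0 pp1] hP unfolding Sc_def al_def be_def by simp
  have Imlamf: "Im (lamf Sc p0 \<i>) = tt/2"
  proof -
    have e: "lamf Sc p0 \<i> = L2 / 2" using lamf_eq by (simp add: field_simps)
    show ?thesis unfolding e using ImL2 by (simp add: Im_divide_numeral)
  qed
  have "Im (aaf Sc p0 \<i>) = tt/2" "Im (bbf Sc p0 \<i>) = tt/2"
    unfolding aaf_def bbf_def using Imlamf unfolding Sc_def by simp_all
  hence "aaf Sc p0 \<i> \<noteq> 0" "bbf Sc p0 \<i> \<noteq> 0" using ttpos by auto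
  hence "cvec Sc al be p0 \<i> 3 \<noteq> 0" unfolding cvec_def by simp
  thus ?thesis using lin Imw by (intro exI[of _ 1] exI[of _ \<omega>] conjI exI[of _ "cvec Sc al be p0 \<i>"]) auto
qed


theorem theorem1:
  fixes r0 s :: real
  assumes "r0 > 0" and "s > sqrt 2"
  shows "\<exists>k::int. \<exists>\<omega>::complex. Im \<omega> > 0 \<and>
           (\<exists>c::nat \<Rightarrow> complex. (\<exists>A\<in>{1..3::nat}. c A \<noteq> 0) \<and>
              lin_NG_eq (schw_g r0) (schw_gi r0) (string_emb r0 s) (string_frame r0 s)
                (\<lambda>xi A. c A * exp (- \<i> * \<omega> * complex_of_real (xi 0)
                                    + \<i> * of_int k * complex_of_real (xi 1))))"
proof (cases "s^2 < 3")
  case True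
  show ?thesis by (rule case_small[OF assms True])
next
  case False
  hence s3: "s^2 \<ge> 3" by simp
  show ?thesis by (rule case_large[OF assms s3])
qed

end
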